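(* Let $n\in\mathbb N$. Then $\delta(n)<\delta(m)$ for every $m\in\mathbb N$ with $m>n$ if and only if $n=k^2$ or $n=k^2+k$ for some $k\in\mathbb N$ (in which case $\delta(n)=2k$, resp. $\delta(n)=2k+1$).
   Context: $\mathbb N$ is the set of positive integers. For $n\in\mathbb N$, $\delta(n)=\min\{\,r+s : r,s\in\mathbb N,\ r\le s,\ rs=n\,\}$, i.e. the minimum of $d+n/d$ over positive divisors $d$ of $n$. *)

theory Defs
  imports Main
begin

definition delta :: "nat \<Rightarrow> nat" where
  "delta n = Min {r + s | r s. 0 < r \<and> 0 < s \<and> r \<le> s \<and> r * s = n}"

end

theory Submission
  imports Defs
begin

lemma delta_fin: "finite {r + s | r s. 0 < r \<and> 0 < s \<and> r \<le> s \<and> r * s = (n::nat)}"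
proof -
  have "{r + s | r s. 0 < r \<and> 0 < s \<and> r \<le> s \<and> r * s = n} \<subseteq> {..2*n}"
  proof
    fix x assume "x \<in> {r + s | r s. 0 < r \<and> 0 < s \<and> r \<le> s \<and> r * s = n}"
    then obtain r s where h: "x = r + s" "0 < r" "0 < s" "r * s = n" by blast
    have "r * 1 \<le> r * s" using h by (intro mult_le_mono2) simp
    moreover have "1 * s \<le> r * s" using h by (intro mult_le_mono1) simp
    ultimately show "x \<in> {..2*n}" using h by auto
  qed
  thus ?thesis using finite_subset by blast
qed

lemma delta_le:
  assumes "0 < r" "r \<le> s" "r * s = n"
  shows "delta n \<le> r + s"
  unfolding delta_def
proof (rule Min_le[OF delta_fin])
  show "r + s \<in> {r + s |r s. 0 < r \<and> 0 < s \<and> r \<le> s \<and> r * s = n}"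
    using assms by (intro CollectI exI[of _ r] exI[of _ s]) auto
qed

lemma delta_ex:
  assumes "(n::nat) \<ge> 1"
  shows "\<exists>r s. 0 < r \<and> r \<le> s \<and> r * s = n \<and> delta n = r + s"
proof -
  let ?S = "{r + s | r s. 0 < r \<and> 0 < s \<and> r \<le> s \<and> r * s = n}"
  have "1 + n \<in> ?S" using assms by (intro CollectI exI[of _ 1] exI[of _ n]) auto
  hence "?S \<noteq> {}" by blast
  hence "delta n \<in> ?S" unfolding delta_def using Min_in[OF delta_fin] by blast
  thus ?thesis by blast
qed

lemma amgm: "4 * ((r::nat) * s) \<le> (r + s)^2"
proof -
  have "int (4 * (r * s)) \<le> int ((r + s)^2)"
  proof -
    have "(int r + int s)^2 - 4 * (int r * int s) = (int r - int s)^2"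
      by (simp add: power2_eq_square algebra_simps)
    moreover have "(int r - int s)^2 \<ge> 0" by simp
    ultimately show ?thesis by (simp only: of_nat_mult of_nat_power of_nat_add of_nat_numeral)
  qed
  thus ?thesis by linarith
qed

lemma delta_lower:
  assumes "(n::nat) \<ge> 1"
  shows "4 * n \<le> (delta n)^2"
proof -
  obtain r s where "0 < r" "r \<le> s" "r * s = n" "delta n = r + s" using delta_ex[OF assms] by blast
  thus ?thesis using amgm[of r s] by simp
qed

lemma sq_bound:
  assumes "(n::nat) \<ge> 1" "t^2 < 4 * n"
  shows "t < delta n"
proof (rule ccontr)
  assume "\<not> t < delta n"
  hence "delta n \<le> t" by simp
  hence "(delta n)^2 \<le> t^2" by (rule power_mono) simp
  moreover have "4 * n \<le> (delta n)^2" using assms(1) by (rule delta_lower)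
  ultimately show False using assms(2) by linarith
qed

lemma delta_sq: assumes "k \<ge> 1" shows "delta (k^2) = 2*k"
proof -
  have "delta (k^2) \<le> k + k" by (rule delta_le) (use assms in \<open>simp_all add: power2_eq_square\<close>)
  moreover have "(2*k - 1)^2 < 4 * k^2"
  proof -
    have "2*k - 1 < 2*k" using assms by simp
    hence "(2*k - 1)^2 < (2*k)^2" by (rule power_strict_mono) simp_all
    thus ?thesis by (simp add: power_mult_distrib)
  qed
  hence "2*k - 1 < delta (k^2)" using assms by (intro sq_bound) simp_all
  ultimately show ?thesis by simp
qed

lemma delta_pron: assumes "k \<ge> 1" shows "delta (k^2 + k) = 2*k + 1"
proof -
  have "delta (k^2 + k) \<le> k + (k+1)" by (rule delta_le) (use assms in \<open>simp_all add: power2_eq_square\<close>)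
  moreover have "(2*k)^2 < 4 * (k^2 + k)" using assms by (simp add: power_mult_distrib)
  hence "2*k < delta (k^2 + k)" using assms by (intro sq_bound) simp_all
  ultimately show ?thesis by simp
qed

lemma bigger:
  assumes "m > n" "t^2 < 4 * n + 4"
  shows "delta m > t"
  using assms by (intro sq_bound) simp_all

theorem proposition5p4:
  fixes n :: nat
  assumes "n \<ge> 1"
  shows "((\<forall>m. m > n \<longrightarrow> delta n < delta m) \<longleftrightarrow>
           (\<exists>k\<ge>1. n = k^2 \<or> n = k^2 + k))
         \<and> (\<forall>k\<ge>1. n = k^2 \<longrightarrow> delta n = 2*k)
         \<and> (\<forall>k\<ge>1. n = k^2 + k \<longrightarrow> delta n = 2*k + 1)"
proof (intro conjI allI impI iffI)
  assume H: "\<forall>m. m > n \<longrightarrow> delta n < delta m"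
  obtain r s where rs: "0 < r" "r \<le> s" "r * s = n" "delta n = r + s"
    using delta_ex[OF assms] by blast
  show "\<exists>k\<ge>1. n = k^2 \<or> n = k^2 + k"
  proof (cases "r + 2 \<le> s")
    case True
    define d where "d = s - r - 2"
    have d: "s = r + 2 + d" using True unfolding d_def by simp
    let ?m = "(r+1) * (r+1+d)"
    have "?m > n" using rs d by (simp add: algebra_simps)
    hence "delta n < delta ?m" using H by blast
    moreover have "delta ?m \<le> (r+1) + (r+1+d)" by (rule delta_le) auto
    ultimately show ?thesis using rs d by simp
  next
    case False
    hence "s = r \<or> s = r + 1" using rs by linarith
    thus ?thesis
    proof
      assume "s = r" thus ?thesis using rs by (intro exI[of _ r]) (simp add: power2_eq_square)
    next
      assume "s = r + 1" thus ?thesis using rs by (intro exI[of _ r]) (simp add: power2_eq_square)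
    qed
  qed
next
  assume "\<exists>k\<ge>1. n = k^2 \<or> n = k^2 + k"
  then obtain k where k: "k \<ge> 1" "n = k^2 \<or> n = k^2 + k" by blast
  fix m assume m: "m > n"
  show "delta n < delta m"
    using k(2)
  proof
    assume "n = k^2"
    thus ?thesis using bigger[OF m, of "2*k"] delta_sq[OF k(1)]
      by (simp add: power_mult_distrib)
  next
    assume "n = k^2 + k"
    moreover have "(2*k+1)^2 = 4*k^2 + 4*k + 1" by (simp add: power2_eq_square algebra_simps)
    ultimately show ?thesis using bigger[OF m, of "2*k+1"] delta_pron[OF k(1)]
      by simp
  qed
next
  fix k :: nat assume "k \<ge> 1" "n = k^2" thus "delta n = 2*k" using delta_sq by simp
next
  fix k :: nat assume "k \<ge> 1" "n = k^2 + k" thus "delta n = 2*k+1" using delta_pron by simp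
qed

end
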